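(* Let $\lambda_0 \geq 0 > \lambda_1$ be real numbers and let $z_1, z_2, z_3$ be complex numbers with $z_j = a_j + b_j i$, $a_j \in \mathbb{R}$, $b_j > 0$ for $j = 1, 2, 3$. If $\lambda_0 + \lambda_1 - 2\sum_{j=1}^3 |z_j| \geq 0$, then there is an $8 \times 8$ normal centrosymmetric nonnegative matrix with eigenvalues $\lambda_0, \lambda_1, z_1, z_2, z_3, \overline{z}_1, \overline{z}_2, \overline{z}_3$.
   Context: $J$ is the $8 \times 8$ reverse identity matrix (ones on the anti-diagonal, zeros elsewhere). A matrix $Q$ is centrosymmetric if $JQJ = Q$, nonnegative if all entries are nonnegative, and normal if $QQ^* = Q^*Q$. *)

theory Defs
  imports "Jordan_Normal_Form.Char_Poly"
begin

definition rev_id_mat :: "nat \<Rightarrow> 'a :: {zero,one} mat" where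
  "rev_id_mat n = mat n n (\<lambda>(i,j). if i + j = n - 1 then 1 else 0)"

definition centrosymmetric :: "'a :: semiring_1 mat \<Rightarrow> bool" where
  "centrosymmetric Q \<longleftrightarrow> rev_id_mat (dim_row Q) * Q * rev_id_mat (dim_row Q) = Q"

definition nonneg_mat :: "real mat \<Rightarrow> bool" where
  "nonneg_mat Q \<longleftrightarrow> (\<forall>i < dim_row Q. \<forall>j < dim_col Q. Q $$ (i,j) \<ge> 0)"

(* normality of a real matrix: Q Q^* = Q^* Q, where Q^* = Q^T for real Q *)
definition normal_real_mat :: "real mat \<Rightarrow> bool" where
  "normal_real_mat Q \<longleftrightarrow> Q * transpose_mat Q = transpose_mat Q * Q"

(* the (complex) eigenvalues of Q, listed with algebraic multiplicity, are exactly the list ms *)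
definition has_eigenvalues :: "real mat \<Rightarrow> complex list \<Rightarrow> bool" where
  "has_eigenvalues Q ms \<longleftrightarrow>
     char_poly (map_mat complex_of_real Q) = (\<Prod>\<mu>\<leftarrow>ms. [:- \<mu>, 1:])"

end

theory Submission
  imports Defs
begin

definition hh :: "nat \<Rightarrow> nat \<Rightarrow> 'a::comm_ring_1" where
  "hh i j = (-1) ^ ((i mod 2)*(j mod 2) + (i div 2 mod 2)*(j div 2 mod 2) + (i div 4 mod 2)*(j div 4 mod 2))"

definition Hm :: "'a::comm_ring_1 mat" where "Hm = mat 8 8 (\<lambda>(i,j). hh i j)"

definition Dm :: "'a \<Rightarrow> 'a \<Rightarrow> 'a \<Rightarrow> 'a \<Rightarrow> 'a \<Rightarrow> 'a \<Rightarrow> 'a \<Rightarrow> 'a \<Rightarrow> 'a::comm_ring_1 mat" where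
  "Dm l0 l1 a1 b1 a2 b2 a3 b3 = mat 8 8 (\<lambda>(i,j).
     if i = 0 \<and> j = 0 then l0 else if i = 3 \<and> j = 3 then l1
     else if (i = 5 \<and> j = 5) \<or> (i = 6 \<and> j = 6) then a1
     else if i = 5 \<and> j = 6 then b1 else if i = 6 \<and> j = 5 then - b1
     else if (i = 1 \<and> j = 1) \<or> (i = 2 \<and> j = 2) then a2
     else if i = 1 \<and> j = 2 then b2 else if i = 2 \<and> j = 1 then - b2
     else if (i = 4 \<and> j = 4) \<or> (i = 7 \<and> j = 7) then a3
     else if i = 4 \<and> j = 7 then b3 else if i = 7 \<and> j = 4 then - b3
     else 0)"

lemma sum8: "sum f {..<8::nat} = f 0 + f 1 + f 2 + f 3 + f 4 + f 5 + f 6 + f 7"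
  by (simp add: eval_nat_numeral add.assoc)

lemma less8: "(i::nat) < 8 \<longleftrightarrow> i = 0 \<or> i = 1 \<or> i = 2 \<or> i = 3 \<or> i = 4 \<or> i = 5 \<or> i = 6 \<or> i = 7"
  by auto

lemma mult8: assumes "A \<in> carrier_mat 8 8" "B \<in> carrier_mat 8 8" "i < 8" "j < 8"
  shows "(A * B) $$ (i,j) = (\<Sum>k<8. A $$ (i,k) * B $$ (k,j))"
  using assms by (simp add: scalar_prod_def lessThan_atLeast0)

lemma Hm_carrier[simp]: "Hm \<in> carrier_mat 8 8" by (simp add: Hm_def)
lemma Hm_dim[simp]: "dim_row Hm = 8" "dim_col Hm = 8" by (simp_all add: Hm_def)
lemma Dm_carrier[simp]: "Dm l0 l1 a1 b1 a2 b2 a3 b3 \<in> carrier_mat 8 8" by (simp add: Dm_def)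
lemma Dm_dim[simp]: "dim_row (Dm l0 l1 a1 b1 a2 b2 a3 b3) = 8" "dim_col (Dm l0 l1 a1 b1 a2 b2 a3 b3) = 8"
  by (simp_all add: Dm_def)

lemma HH: "(Hm :: 'a::comm_ring_1 mat) * Hm = smult_mat 8 (1\<^sub>m 8)"
proof (rule eq_matI)
  fix i j assume "i < dim_row (smult_mat (8::'a) (1\<^sub>m 8))" "j < dim_col (smult_mat (8::'a) (1\<^sub>m 8))"
  then have i: "i < 8" and j: "j < 8" by auto
  show "(Hm * Hm) $$ (i, j) = smult_mat (8::'a) (1\<^sub>m 8) $$ (i, j)"
    unfolding mult8[OF Hm_carrier Hm_carrier i j] sum8
    using i j unfolding less8 by (auto simp: Hm_def hh_def)
qed auto

lemma HDH_entry: assumes r: "r < 8" and s: "s < 8"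
  shows "(Hm * Dm l0 l1 a1 b1 a2 b2 a3 b3 * Hm) $$ (r,s) =
    l0 * hh r 0 * hh 0 s + l1 * hh r 3 * hh 3 s
    + a1 * (hh r 5 * hh 5 s + hh r 6 * hh 6 s) + b1 * (hh r 5 * hh 6 s - hh r 6 * hh 5 s)
    + a2 * (hh r 1 * hh 1 s + hh r 2 * hh 2 s) + b2 * (hh r 1 * hh 2 s - hh r 2 * hh 1 s)
    + a3 * (hh r 4 * hh 4 s + hh r 7 * hh 7 s) + b3 * (hh r 4 * hh 7 s - hh r 7 * hh 4 s)"
proof -
  have c: "Hm * Dm l0 l1 a1 b1 a2 b2 a3 b3 \<in> carrier_mat 8 8" by (rule mult_carrier_mat[OF Hm_carrier Dm_carrier])
  show ?thesis
    apply (subst mult8[OF c Hm_carrier r s])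
    apply (simp only: sum8)
    apply (subst mult8[OF Hm_carrier Dm_carrier r], simp)+
    using r s apply (simp add: sum8 Hm_def Dm_def algebra_simps)
    done
qed


lemma hh_pm: "hh i j = (1::'a::comm_ring_1) \<or> hh i j = -1"
  unfolding hh_def by (metis neg_one_even_power neg_one_odd_power)

lemma hh_0[simp]: "hh r 0 = 1" "hh 0 s = 1"
  by (simp_all add: hh_def)

lemma hh_sym: "hh i j = hh j i"
  unfolding hh_def by (simp add: mult.commute)

lemma hh_rev: assumes "r < 8" "k < 8"
  shows "hh (7 - r) k = hh 7 k * hh r k"
  using assms unfolding less8 by (auto simp: hh_def)

lemma hh7: "hh 7 1 = -1" "hh 7 2 = -1" "hh 7 3 = 1" "hh 7 4 = -1" "hh 7 5 = 1"
  "hh 7 6 = 1" "hh 7 7 = -1"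
  by (simp_all add: hh_def)

lemma blk_bound:
  fixes z :: complex and x y w t :: real
  assumes "x = 1 \<or> x = -1" "y = 1 \<or> y = -1" "w = 1 \<or> w = -1" "t = 1 \<or> t = -1"
  shows "Re z * (x * w + y * t) + Im z * (x * t - y * w) \<ge> - 2 * cmod z"
  using assms abs_Re_le_cmod[of z] abs_Im_le_cmod[of z] by (auto simp: abs_le_iff)

lemma l1_bound:
  fixes l1 x :: real assumes "l1 < 0" "x = 1 \<or> x = -1" shows "l1 * x \<ge> l1"
  using assms by auto

lemma JAJ: fixes A :: "real mat" assumes A: "A \<in> carrier_mat 8 8" and r: "r < 8" and s: "s < 8"
  shows "(rev_id_mat 8 * A * rev_id_mat 8) $$ (r,s) = A $$ (7 - r, 7 - s)"
proof -
  have J: "rev_id_mat 8 \<in> carrier_mat 8 (8::nat)" by (simp add: rev_id_mat_def)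
  have c: "rev_id_mat 8 * A \<in> carrier_mat 8 8" by (rule mult_carrier_mat[OF J A])
  show ?thesis
    apply (subst mult8[OF c J r s])
    apply (simp only: sum8)
    apply (subst mult8[OF J A r], simp)+
    using r s A unfolding less8 by (auto simp: sum8 rev_id_mat_def)
qed

lemma DD: "Dm l0 l1 a1 b1 a2 b2 a3 b3 * Dm l0 l1 a1 (-b1) a2 (-b2) a3 (-b3)
   = Dm l0 l1 a1 (-b1) a2 (-b2) a3 (-b3) * (Dm l0 l1 a1 b1 a2 b2 a3 b3 :: 'a::comm_ring_1 mat)"
proof (rule eq_matI)
  fix i j assume "i < dim_row (Dm l0 l1 a1 (-b1) a2 (-b2) a3 (-b3) * (Dm l0 l1 a1 b1 a2 b2 a3 b3 :: 'a mat))"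
    "j < dim_col (Dm l0 l1 a1 (-b1) a2 (-b2) a3 (-b3) * (Dm l0 l1 a1 b1 a2 b2 a3 b3 :: 'a mat))"
  then have i: "i < 8" and j: "j < 8" by auto
  show "(Dm l0 l1 a1 b1 a2 b2 a3 b3 * Dm l0 l1 a1 (-b1) a2 (-b2) a3 (-b3)) $$ (i, j) =
        (Dm l0 l1 a1 (-b1) a2 (-b2) a3 (-b3) * (Dm l0 l1 a1 b1 a2 b2 a3 b3 :: 'a mat)) $$ (i, j)"
    unfolding mult8[OF Dm_carrier Dm_carrier i j] sum8
    using i j unfolding less8 by (auto simp: Dm_def algebra_simps)
qed auto

lemma c8: "A \<in> carrier_mat 8 8 \<Longrightarrow> B \<in> carrier_mat 8 8 \<Longrightarrow> A * B \<in> carrier_mat 8 8"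
  by (rule mult_carrier_mat)

lemma HXHY: assumes X: "X \<in> carrier_mat 8 8" and Y: "Y \<in> carrier_mat 8 8"
  shows "(Hm * X * Hm) * (Hm * Y * Hm) = (8::'a::comm_ring_1) \<cdot>\<^sub>m (Hm * (X * Y) * Hm)"
proof -
  have H: "(Hm::'a mat) \<in> carrier_mat 8 8" by simp
  have "(Hm * X * Hm) * (Hm * Y * Hm) = Hm * X * (Hm * Hm) * Y * Hm"
    using X Y H by (simp add: assoc_mult_mat[of _ 8 8 _ 8 _ 8] c8)
  also have "\<dots> = Hm * X * ((8::'a) \<cdot>\<^sub>m 1\<^sub>m 8) * Y * Hm" by (simp add: HH)
  also have "\<dots> = (8::'a) \<cdot>\<^sub>m (Hm * (X * Y) * Hm)"
    using X Y H by (simp add: mult_smult_distrib[of _ 8 8 _ 8] mult_smult_assoc_mat[of _ 8 8 _ 8]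
        assoc_mult_mat[of _ 8 8 _ 8 _ 8] c8)
  finally show ?thesis .
qed


definition Qm :: "real \<Rightarrow> real \<Rightarrow> complex \<Rightarrow> complex \<Rightarrow> complex \<Rightarrow> real mat" where
  "Qm l0 l1 z1 z2 z3 = (1/8) \<cdot>\<^sub>m (Hm * Dm l0 l1 (Re z1) (Im z1) (Re z2) (Im z2) (Re z3) (Im z3) * Hm)"

lemma Qm_carrier: "Qm l0 l1 z1 z2 z3 \<in> carrier_mat 8 8"
  unfolding Qm_def by (simp add: c8)

lemma Qm_dim[simp]: "dim_row (Qm l0 l1 z1 z2 z3) = 8" "dim_col (Qm l0 l1 z1 z2 z3) = 8"
  unfolding Qm_def by simp_all

lemma HDH_dim[simp]: "dim_row (Hm * Dm l0 l1 a1 b1 a2 b2 a3 b3 * (Hm :: 'a::comm_ring_1 mat)) = 8"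
  "dim_col (Hm * Dm l0 l1 a1 b1 a2 b2 a3 b3 * (Hm :: 'a::comm_ring_1 mat)) = 8"
  by simp_all

lemma Qm_entry: assumes r: "r < 8" and s: "s < 8"
  shows "Qm l0 l1 z1 z2 z3 $$ (r,s) = 1/8 * (
    l0 * hh r 0 * hh 0 s + l1 * hh r 3 * hh 3 s
    + Re z1 * (hh r 5 * hh 5 s + hh r 6 * hh 6 s) + Im z1 * (hh r 5 * hh 6 s - hh r 6 * hh 5 s)
    + Re z2 * (hh r 1 * hh 1 s + hh r 2 * hh 2 s) + Im z2 * (hh r 1 * hh 2 s - hh r 2 * hh 1 s)
    + Re z3 * (hh r 4 * hh 4 s + hh r 7 * hh 7 s) + Im z3 * (hh r 4 * hh 7 s - hh r 7 * hh 4 s))"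
proof -
  have "Qm l0 l1 z1 z2 z3 $$ (r,s) = 1/8 * (Hm * Dm l0 l1 (Re z1) (Im z1) (Re z2) (Im z2) (Re z3) (Im z3) * Hm) $$ (r,s)"
    unfolding Qm_def by (rule index_smult_mat(1)) (use r s in simp_all)
  then show ?thesis unfolding HDH_entry[OF r s] by simp
qed

lemma pm_mult: "(x::real) = 1 \<or> x = -1 \<Longrightarrow> y = 1 \<or> y = -1 \<Longrightarrow> x * y = 1 \<or> x * y = -1"
  by auto

lemma final_ineq: fixes X1 Y1 X2 Y2 X3 Y3 L l0 l1 c1 c2 c3 :: real
  assumes "X1 + Y1 \<ge> -2*c1" "X2 + Y2 \<ge> -2*c2" "X3 + Y3 \<ge> -2*c3" "L \<ge> l1"
   "l0 + l1 - 2*(c1+c2+c3) \<ge> 0" shows "0 \<le> l0 + L + X1 + Y1 + X2 + Y2 + X3 + Y3"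
proof -
  have "l0 + L + X1 + Y1 + X2 + Y2 + X3 + Y3 = l0 + L + (X1 + Y1) + (X2 + Y2) + (X3 + Y3)" by simp
  also have "\<dots> \<ge> l0 + l1 + (-2*c1) + (-2*c2) + (-2*c3)" using assms(1-4) by (intro add_mono) auto
  also have "l0 + l1 + (-2*c1) + (-2*c2) + (-2*c3) = l0 + l1 - 2*(c1+c2+c3)" by (simp add: algebra_simps)
  finally show ?thesis using assms(5) by linarith
qed

lemma Qm_nonneg:
  assumes "l0 \<ge> 0" and "0 > l1"
    and "l0 + l1 - 2 * (cmod z1 + cmod z2 + cmod z3) \<ge> 0"
  shows "nonneg_mat (Qm l0 l1 z1 z2 z3)"
  unfolding nonneg_mat_def
proof (intro allI impI)
  fix r s assume r0: "r < dim_row (Qm l0 l1 z1 z2 z3)" and s0: "s < dim_col (Qm l0 l1 z1 z2 z3)"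
  then have r: "r < 8" and s: "s < 8" by auto
  have p: "\<And>i j. (hh i j::real) = 1 \<or> (hh i j::real) = -1" by (rule hh_pm)
  have p2: "(hh r 3 * hh 3 s::real) = 1 \<or> (hh r 3 * hh 3 s::real) = -1"
    by (rule pm_mult[OF p p])
  have b1: "Re z1 * (hh r 5 * hh 5 s + hh r 6 * hh 6 s) + Im z1 * (hh r 5 * hh 6 s - hh r 6 * hh 5 s) \<ge> - 2 * cmod z1"
    by (rule blk_bound[OF p p p p])
  have b2: "Re z2 * (hh r 1 * hh 1 s + hh r 2 * hh 2 s) + Im z2 * (hh r 1 * hh 2 s - hh r 2 * hh 1 s) \<ge> - 2 * cmod z2"
    by (rule blk_bound[OF p p p p])
  have b3: "Re z3 * (hh r 4 * hh 4 s + hh r 7 * hh 7 s) + Im z3 * (hh r 4 * hh 7 s - hh r 7 * hh 4 s) \<ge> - 2 * cmod z3"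
    by (rule blk_bound[OF p p p p])
  have l: "l1 * hh r 3 * hh 3 s \<ge> l1" unfolding mult.assoc by (rule l1_bound[OF assms(2) p2])
  show "Qm l0 l1 z1 z2 z3 $$ (r, s) \<ge> 0"
    unfolding Qm_entry[OF r s] hh_0 mult_1_right using b1 b2 b3 l assms
    by (intro mult_nonneg_nonneg) (simp, rule final_ineq[OF b1 b2 b3 l assms(3)])
qed

lemma hh_rev2: assumes "s < 8" "k < 8" shows "hh k (7 - s) = hh k 7 * hh k s"
  using hh_rev[OF assms] hh_sym by metis

lemma hh7': "hh (Suc 0) 7 = -1" "hh 7 (Suc 0) = -1" "hh 1 7 = -1" "hh 2 7 = -1" "hh 3 7 = 1" "hh 4 7 = -1" "hh 5 7 = 1"
  "hh 6 7 = 1" "hh 7 7 = -1"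
  by (simp_all add: hh_def)

lemma Qm_centro: "centrosymmetric (Qm l0 l1 z1 z2 z3)"
  unfolding centrosymmetric_def
proof (rule eq_matI)
  have d: "dim_row (Qm l0 l1 z1 z2 z3) = 8" by simp
  fix r s assume "r < dim_row (Qm l0 l1 z1 z2 z3)" "s < dim_col (Qm l0 l1 z1 z2 z3)"
  then have r: "r < 8" and s: "s < 8" by auto
  have r': "7 - r < 8" and s': "7 - s < 8" by auto
  show "(rev_id_mat (dim_row (Qm l0 l1 z1 z2 z3)) * Qm l0 l1 z1 z2 z3 * rev_id_mat (dim_row (Qm l0 l1 z1 z2 z3))) $$ (r, s) =
    Qm l0 l1 z1 z2 z3 $$ (r, s)"
    unfolding d JAJ[OF Qm_carrier r s] Qm_entry[OF r s] Qm_entry[OF r' s']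
    by (simp add: hh_rev[OF r] hh_rev2[OF s] hh7 hh7' algebra_simps)
qed (auto simp: rev_id_mat_def)

lemma HDH_transpose: "transpose_mat (Hm * Dm l0 l1 a1 b1 a2 b2 a3 b3 * Hm)
   = Hm * Dm l0 l1 a1 (-b1) a2 (-b2) a3 (-b3) * (Hm :: 'a::comm_ring_1 mat)"
proof (rule eq_matI)
  fix i j assume "i < dim_row (Hm * Dm l0 l1 a1 (-b1) a2 (-b2) a3 (-b3) * (Hm :: 'a::comm_ring_1 mat))"
    "j < dim_col (Hm * Dm l0 l1 a1 (-b1) a2 (-b2) a3 (-b3) * (Hm :: 'a::comm_ring_1 mat))"
  then have i: "i < 8" and j: "j < 8" by auto
  show "transpose_mat (Hm * Dm l0 l1 a1 b1 a2 b2 a3 b3 * Hm) $$ (i, j) =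
    (Hm * Dm l0 l1 a1 (-b1) a2 (-b2) a3 (-b3) * (Hm :: 'a::comm_ring_1 mat)) $$ (i, j)"
  proof -
    have e: "transpose_mat (Hm * Dm l0 l1 a1 b1 a2 b2 a3 b3 * (Hm :: 'a mat)) $$ (i, j) = (Hm * Dm l0 l1 a1 b1 a2 b2 a3 b3 * (Hm :: 'a mat)) $$ (j, i)"
      by (rule index_transpose_mat(1)) (use i j in simp_all)
    show ?thesis unfolding e HDH_entry[OF i j] HDH_entry[OF j i]
      by (simp add: hh_sym[of i] hh_sym[of j] algebra_simps)
  qed
qed auto

lemma transpose_smult: "transpose_mat (c \<cdot>\<^sub>m A) = c \<cdot>\<^sub>m transpose_mat A"
  by (rule eq_matI) auto

lemma sm_sm: "a \<cdot>\<^sub>m (b \<cdot>\<^sub>m A) = (a * b :: 'a::comm_ring_1) \<cdot>\<^sub>m A"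
  by (rule eq_matI) auto

lemma Qm_normal: "normal_real_mat (Qm l0 l1 z1 z2 z3)"
proof -
  let ?D = "Dm l0 l1 (Re z1) (Im z1) (Re z2) (Im z2) (Re z3) (Im z3) :: real mat"
  let ?D' = "Dm l0 l1 (Re z1) (- Im z1) (Re z2) (- Im z2) (Re z3) (- Im z3) :: real mat"
  have T: "transpose_mat (Qm l0 l1 z1 z2 z3) = (1/8) \<cdot>\<^sub>m (Hm * ?D' * Hm)"
    unfolding Qm_def transpose_smult HDH_transpose ..
  have c1: "Hm * ?D * Hm \<in> carrier_mat 8 8" by (simp add: c8)
  have c2: "Hm * ?D' * Hm \<in> carrier_mat 8 8" by (simp add: c8)
  have "Qm l0 l1 z1 z2 z3 * transpose_mat (Qm l0 l1 z1 z2 z3) = (1/8 * (1/8)) \<cdot>\<^sub>m ((Hm * ?D * Hm) * (Hm * ?D' * Hm))"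
    unfolding T unfolding Qm_def using c1 c2
    by (simp add: mult_smult_distrib[of _ 8 8 _ 8] mult_smult_assoc_mat[of _ 8 8 _ 8] c8 sm_sm)
  also have "\<dots> = (1/8 * (1/8)) \<cdot>\<^sub>m ((Hm * ?D' * Hm) * (Hm * ?D * Hm))"
    by (simp add: HXHY DD)
  also have "\<dots> = transpose_mat (Qm l0 l1 z1 z2 z3) * Qm l0 l1 z1 z2 z3"
    unfolding T unfolding Qm_def using c1 c2
    by (simp add: mult_smult_distrib[of _ 8 8 _ 8] mult_smult_assoc_mat[of _ 8 8 _ 8] c8 sm_sm)
  finally show ?thesis unfolding normal_real_mat_def .
qed


definition bk :: "nat \<Rightarrow> nat \<Rightarrow> complex \<Rightarrow> complex \<Rightarrow> complex \<Rightarrow> complex \<Rightarrow> nat \<Rightarrow> nat \<Rightarrow> complex" where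
  "bk p q x11 x12 x21 x22 i j = (if i = p \<and> j = p then x11 else if i = p \<and> j = q then x12
     else if i = q \<and> j = p then x21 else if i = q \<and> j = q then x22 else 0)"

definition P2 :: "complex mat" where
  "P2 = mat 8 8 (\<lambda>(i,j). (if i = j \<and> (i = 0 \<or> i = 3) then 1 else 0)
     + bk 5 6 1 1 \<i> (-\<i>) i j + bk 1 2 1 1 \<i> (-\<i>) i j + bk 4 7 1 1 \<i> (-\<i>) i j)"

definition P2i :: "complex mat" where
  "P2i = mat 8 8 (\<lambda>(i,j). (if i = j \<and> (i = 0 \<or> i = 3) then 1 else 0)
     + bk 5 6 (1/2) (-\<i>/2) (1/2) (\<i>/2) i j + bk 1 2 (1/2) (-\<i>/2) (1/2) (\<i>/2) i j
     + bk 4 7 (1/2) (-\<i>/2) (1/2) (\<i>/2) i j)"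

definition Lm :: "complex list \<Rightarrow> complex mat" where
  "Lm xs = mat 8 8 (\<lambda>(i,j). if i = j then xs ! i else 0)"

definition Dc :: "real \<Rightarrow> real \<Rightarrow> complex \<Rightarrow> complex \<Rightarrow> complex \<Rightarrow> complex mat" where
  "Dc l0 l1 z1 z2 z3 = Dm (of_real l0) (of_real l1) (of_real (Re z1)) (of_real (Im z1))
     (of_real (Re z2)) (of_real (Im z2)) (of_real (Re z3)) (of_real (Im z3))"

lemma P2_carrier[simp]: "P2 \<in> carrier_mat 8 8" by (simp add: P2_def)
lemma P2i_carrier[simp]: "P2i \<in> carrier_mat 8 8" by (simp add: P2i_def)
lemma Lm_carrier[simp]: "Lm xs \<in> carrier_mat 8 8" by (simp add: Lm_def)
lemma P2_dim[simp]: "dim_row P2 = 8" "dim_col P2 = 8" by (simp_all add: P2_def)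
lemma P2i_dim[simp]: "dim_row P2i = 8" "dim_col P2i = 8" by (simp_all add: P2i_def)
lemma Lm_dim[simp]: "dim_row (Lm xs) = 8" "dim_col (Lm xs) = 8" by (simp_all add: Lm_def)
lemma Dc_carrier[simp]: "Dc l0 l1 z1 z2 z3 \<in> carrier_mat 8 8" by (simp add: Dc_def)
lemma Dc_dim[simp]: "dim_row (Dc l0 l1 z1 z2 z3) = 8" "dim_col (Dc l0 l1 z1 z2 z3) = 8" by (simp_all add: Dc_def)

lemma P2_inv1: "P2 * P2i = 1\<^sub>m 8"
proof (rule eq_matI)
  fix i j assume "i < dim_row (1\<^sub>m 8 :: complex mat)" "j < dim_col (1\<^sub>m 8 :: complex mat)"
  then have i: "i < 8" and j: "j < 8" by auto
  show "(P2 * P2i) $$ (i, j) = 1\<^sub>m 8 $$ (i, j)"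
    unfolding mult8[OF P2_carrier P2i_carrier i j] sum8
    using i j unfolding less8 by (auto simp: P2_def P2i_def bk_def)
qed auto

lemma P2_inv2: "P2i * P2 = 1\<^sub>m 8"
proof (rule eq_matI)
  fix i j assume "i < dim_row (1\<^sub>m 8 :: complex mat)" "j < dim_col (1\<^sub>m 8 :: complex mat)"
  then have i: "i < 8" and j: "j < 8" by auto
  show "(P2i * P2) $$ (i, j) = 1\<^sub>m 8 $$ (i, j)"
    unfolding mult8[OF P2i_carrier P2_carrier i j] sum8
    using i j unfolding less8 by (auto simp: P2_def P2i_def bk_def)
qed auto

definition evs :: "real \<Rightarrow> real \<Rightarrow> complex \<Rightarrow> complex \<Rightarrow> complex \<Rightarrow> complex list" where
  "evs l0 l1 z1 z2 z3 = [of_real l0, z2, cnj z2, of_real l1, z3, z1, cnj z1, cnj z3]"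

lemma DP: "Dc l0 l1 z1 z2 z3 * P2 = P2 * Lm (evs l0 l1 z1 z2 z3)"
proof (rule eq_matI)
  fix i j assume "i < dim_row (P2 * Lm (evs l0 l1 z1 z2 z3))" "j < dim_col (P2 * Lm (evs l0 l1 z1 z2 z3))"
  then have i: "i < 8" and j: "j < 8" by auto
  show "(Dc l0 l1 z1 z2 z3 * P2) $$ (i, j) = (P2 * Lm (evs l0 l1 z1 z2 z3)) $$ (i, j)"
    unfolding mult8[OF Dc_carrier P2_carrier i j] mult8[OF P2_carrier Lm_carrier i j] sum8
    using i j unfolding less8
    by (auto simp: P2_def Lm_def Dc_def Dm_def bk_def evs_def complex_eq_iff)
qed auto


lemma of_real_hh: "complex_of_real (hh i j) = hh i j" by (simp add: hh_def)

lemma one_sm: "(1::'a::comm_ring_1) \<cdot>\<^sub>m A = A" by (rule eq_matI) auto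

lemma mapQ: "map_mat complex_of_real (Qm l0 l1 z1 z2 z3) = (1/8) \<cdot>\<^sub>m (Hm * Dc l0 l1 z1 z2 z3 * Hm)"
proof (rule eq_matI)
  fix i j assume "i < dim_row ((1/8) \<cdot>\<^sub>m (Hm * Dc l0 l1 z1 z2 z3 * Hm))"
    "j < dim_col ((1/8) \<cdot>\<^sub>m (Hm * Dc l0 l1 z1 z2 z3 * Hm))"
  then have i: "i < 8" and j: "j < 8" by auto
  have d: "dim_row (Qm l0 l1 z1 z2 z3) = 8" "dim_col (Qm l0 l1 z1 z2 z3) = 8" using Qm_carrier by auto
  show "map_mat complex_of_real (Qm l0 l1 z1 z2 z3) $$ (i, j) = ((1/8) \<cdot>\<^sub>m (Hm * Dc l0 l1 z1 z2 z3 * Hm)) $$ (i, j)"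
  proof -
    have e1: "map_mat complex_of_real (Qm l0 l1 z1 z2 z3) $$ (i, j) = of_real (Qm l0 l1 z1 z2 z3 $$ (i, j))"
      by (rule index_map_mat(1)) (use i j in simp_all)
    have e2: "((1/8) \<cdot>\<^sub>m (Hm * Dc l0 l1 z1 z2 z3 * Hm)) $$ (i, j) = 1/8 * (Hm * Dc l0 l1 z1 z2 z3 * Hm) $$ (i, j)"
      by (rule index_smult_mat(1)) (use i j in simp_all)
    show ?thesis unfolding e1 e2 Qm_entry[OF i j] unfolding Dc_def HDH_entry[OF i j] by (simp add: of_real_hh)
  qed
qed (auto simp: Qm_carrier[THEN carrier_matD(1)] Qm_carrier[THEN carrier_matD(2)])

lemma sim1: "similar_mat (map_mat complex_of_real (Qm l0 l1 z1 z2 z3)) (Dc l0 l1 z1 z2 z3)"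
proof (rule similar_matI[of _ _ Hm "(1/8) \<cdot>\<^sub>m Hm" 8])
  show "{map_mat complex_of_real (Qm l0 l1 z1 z2 z3), Dc l0 l1 z1 z2 z3, Hm, (1/8) \<cdot>\<^sub>m Hm} \<subseteq> carrier_mat 8 8"
    using Qm_carrier by auto
  show "Hm * ((1/8) \<cdot>\<^sub>m Hm) = (1\<^sub>m 8 :: complex mat)"
    by (simp add: mult_smult_distrib[of _ 8 8 _ 8] HH sm_sm one_sm)
  show "(1/8) \<cdot>\<^sub>m Hm * Hm = (1\<^sub>m 8 :: complex mat)"
    by (simp add: mult_smult_assoc_mat[of _ 8 8 _ 8] HH sm_sm one_sm)
  show "map_mat complex_of_real (Qm l0 l1 z1 z2 z3) = Hm * Dc l0 l1 z1 z2 z3 * ((1/8) \<cdot>\<^sub>m Hm)"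
    unfolding mapQ by (simp add: mult_smult_distrib[of _ 8 8 _ 8] c8)
qed

lemma sim2: "similar_mat (Dc l0 l1 z1 z2 z3) (Lm (evs l0 l1 z1 z2 z3))"
proof (rule similar_matI[of _ _ P2 P2i 8])
  show "{Dc l0 l1 z1 z2 z3, Lm (evs l0 l1 z1 z2 z3), P2, P2i} \<subseteq> carrier_mat 8 8" by auto
  show "P2 * P2i = 1\<^sub>m 8" by (rule P2_inv1)
  show "P2i * P2 = 1\<^sub>m 8" by (rule P2_inv2)
  have "Dc l0 l1 z1 z2 z3 = Dc l0 l1 z1 z2 z3 * (P2 * P2i)" unfolding P2_inv1 by simp
  also have "\<dots> = (Dc l0 l1 z1 z2 z3 * P2) * P2i"
    by (simp add: assoc_mult_mat[of _ 8 8 _ 8 _ 8])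
  also have "\<dots> = P2 * Lm (evs l0 l1 z1 z2 z3) * P2i" unfolding DP ..
  finally show "Dc l0 l1 z1 z2 z3 = P2 * Lm (evs l0 l1 z1 z2 z3) * P2i" .
qed

lemma Lm_ut: "upper_triangular (Lm xs)"
  unfolding upper_triangular_def Lm_def by auto

lemma diag_Lm: "length xs = 8 \<Longrightarrow> diag_mat (Lm xs) = xs"
proof -
  assume l: "length xs = 8"
  have "diag_mat (Lm xs) = map (\<lambda>i. xs ! i) [0..<8]"
    unfolding diag_mat_def Lm_dim by (rule map_cong) (auto simp: Lm_def)
  also have "\<dots> = xs" using map_nth[of xs] l by simp
  finally show ?thesis .
qed

lemma eig: "has_eigenvalues (Qm l0 l1 z1 z2 z3) [complex_of_real l0, complex_of_real l1, z1, z2, z3,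
                                  cnj z1, cnj z2, cnj z3]"
proof -
  have "char_poly (map_mat complex_of_real (Qm l0 l1 z1 z2 z3)) = char_poly (Lm (evs l0 l1 z1 z2 z3))"
    by (rule char_poly_similar, rule similar_mat_trans[OF sim1 sim2])
  also have "\<dots> = (\<Prod>a\<leftarrow>diag_mat (Lm (evs l0 l1 z1 z2 z3)). [:- a, 1:])"
    by (rule char_poly_upper_triangular[OF Lm_carrier Lm_ut])
  also have "\<dots> = (\<Prod>a\<leftarrow>evs l0 l1 z1 z2 z3. [:- a, 1:])"
    by (simp add: diag_Lm evs_def)
  finally show ?thesis unfolding has_eigenvalues_def evs_def
    by (simp only: list.map prod_list.Cons prod_list.Nil mult_ac)
qed


theorem theorem3p12:
  fixes l0 l1 :: real and z1 z2 z3 :: complex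
  assumes "l0 \<ge> 0" and "0 > l1"
    and "Im z1 > 0" and "Im z2 > 0" and "Im z3 > 0"
    and "l0 + l1 - 2 * (cmod z1 + cmod z2 + cmod z3) \<ge> 0"
  shows "\<exists>Q :: real mat. Q \<in> carrier_mat 8 8 \<and> normal_real_mat Q \<and> centrosymmetric Q
            \<and> nonneg_mat Q
            \<and> has_eigenvalues Q [complex_of_real l0, complex_of_real l1, z1, z2, z3,
                                  cnj z1, cnj z2, cnj z3]"
  by (intro exI[of _ "Qm l0 l1 z1 z2 z3"] conjI Qm_carrier Qm_normal Qm_centro
      Qm_nonneg[OF assms(1,2,6)] eig)

end
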